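(* Let $I$ be a monomial ideal in $R=K[x_1,\ldots,x_d]$ ($K$ a field), and let $r=\frac{p}{q}$ be a positive rational number with $p,q$ positive integers. Define the bounded convex set $$\mathcal{C}(I,r)=r\cdot \operatorname{np}(I)+\left(d-\tfrac{1}{q}\right)\cdot S_d$$ (Minkowski sum). If $\mathbf{x}^{\mathbf{a}}$ is a minimal monomial generator of $\overline{I^r}$, then $\mathbf{a}\in\mathcal{C}(I,r)$. Moreover, if $\mathbf{a}\in\mathcal{C}(I,r)\cap\mathbb{N}^d$ then $\mathbf{x}^{\mathbf{a}}\in\overline{I^r}$, and consequently $\overline{I^r}=(\{\mathbf{x}^{\mathbf{a}}\mid \mathbf{a}\in\mathcal{C}(I,r)\cap\mathbb{N}^d\})$.
   Context: $\mathbb{N}$ denotes the non-negative integers and $\mathbf{x}^{\mathbf{a}}=x_1^{a_1}\cdots x_d^{a_d}$. For a monomial ideal $I$, $NP(I)$ is the convex hull in $\mathbb{R}^d$ of $\{\mathbf{a}\in\mathbb{N}^d\mid \mathbf{x}^{\mathbf{a}}\in I\}$, and the Newton polytope $\operatorname{np}(I)$ is the convex hull of the exponent vectors of the minimal monomial generators of $I$. For real $r\ge0$, the $r$-th real power is $\overline{I^r}=(\{\mathbf{x}^{\mathbf{a}}\mid \mathbf{a}\in r\cdot NP(I)\cap\mathbb{N}^d\})$, where $r\cdot X=\{r\mathbf{v}\mid\mathbf{v}\in X\}$. $S_d=\{\mathbf{a}\in\mathbb{R}^d\mid a_i\ge0,\ a_1+\cdots+a_d\le1\}$ is the unit simplex.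 The Minkowski sum is $A+B=\{\mathbf{a}+\mathbf{b}\mid \mathbf{a}\in A,\mathbf{b}\in B\}$. *)

theory Defs
  imports "HOL-Analysis.Analysis"
begin

text \<open>Monomials x^a in K[x_1,...,x_d] are identified with exponent vectors
a :: 'n \<Rightarrow> nat, where the finite type 'n indexes the variables (d = CARD('n)).
A monomial ideal is determined by the set of exponents of the monomials it contains;
this set is closed upwards (x^a \<in> I and a \<le> b imply x^b \<in> I).
The order on 'n \<Rightarrow> nat is the pointwise (divisibility) order.\<close>

definition monomial_ideal :: "('n \<Rightarrow> nat) set \<Rightarrow> bool" where
  "monomial_ideal E \<longleftrightarrow> (\<forall>a\<in>E. \<forall>b. a \<le> b \<longrightarrow> b \<in> E)"

definition gen_ideal :: "('n \<Rightarrow> nat) set \<Rightarrow> ('n \<Rightarrow> nat) set" where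
  "gen_ideal S = {b. \<exists>a\<in>S. a \<le> b}"

definition min_gens :: "('n \<Rightarrow> nat) set \<Rightarrow> ('n \<Rightarrow> nat) set" where
  "min_gens E = {a\<in>E. \<forall>b\<in>E. b \<le> a \<longrightarrow> b = a}"

definition emb :: "('n::finite \<Rightarrow> nat) \<Rightarrow> real^'n" where
  "emb a = (\<chi> i. real (a i))"

definition NP :: "('n::finite \<Rightarrow> nat) set \<Rightarrow> (real^'n) set" where
  "NP E = convex hull (emb ` E)"

definition newton_polytope :: "('n::finite \<Rightarrow> nat) set \<Rightarrow> (real^'n) set" where
  "newton_polytope E = convex hull (emb ` min_gens E)"

text \<open>r-th real power \<open>\<bar>I^r\<bar>\<close>.\<close>
definition real_power :: "('n::finite \<Rightarrow> nat) set \<Rightarrow> real \<Rightarrow> ('n \<Rightarrow> nat) set" where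
  "real_power E r = gen_ideal {a. emb a \<in> (\<lambda>v. r *\<^sub>R v) ` NP E}"

definition unit_simplex :: "(real^'n::finite) set" where
  "unit_simplex = {v. (\<forall>i. 0 \<le> v $ i) \<and> (\<Sum>i\<in>UNIV. v $ i) \<le> 1}"

definition minkowski_sum :: "('a::plus) set \<Rightarrow> 'a set \<Rightarrow> 'a set" where
  "minkowski_sum A B = {x + y | x y. x \<in> A \<and> y \<in> B}"

definition C_set :: "('n::finite \<Rightarrow> nat) set \<Rightarrow> nat \<Rightarrow> nat \<Rightarrow> (real^'n) set" where
  "C_set E p q = minkowski_sum
      ((\<lambda>v. (real p / real q) *\<^sub>R v) ` newton_polytope E)
      ((\<lambda>v. (real CARD('n) - 1 / real q) *\<^sub>R v) ` unit_simplex)"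

end

theory Submission
  imports Defs
begin

lemma emb_nth[simp]: "emb a $ i = real (a i)"
  by (simp add: emb_def)

lemma exists_min_below:
  fixes E :: "('n::finite \<Rightarrow> nat) set"
  assumes "b \<in> E"
  shows "\<exists>a\<in>min_gens E. a \<le> b"
proof -
  obtain a where a: "a \<in> E \<and> a \<le> b" and amin: "\<And>y. y \<in> E \<and> y \<le> b \<Longrightarrow> sum a UNIV \<le> sum y UNIV"
    using ex_has_least_nat[of "\<lambda>x. x \<in> E \<and> x \<le> b" b "\<lambda>x. sum x UNIV"] assms by auto
  have "a \<in> min_gens E"
    unfolding min_gens_def
  proof (safe)
    show "a \<in> E" using a by simp
    fix y assume y: "y \<in> E" "y \<le> a"
    show "y = a"
    proof (rule ccontr)
      assume "y \<noteq> a"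
      then obtain i where "y i \<noteq> a i" by auto
      with y(2) have "y i < a i" by (metis le_fun_def le_neq_implies_less)
      hence "sum y UNIV < sum a UNIV"
        using y(2) by (intro sum_strict_mono_ex1) (auto simp: le_fun_def)
      moreover have "sum a UNIV \<le> sum y UNIV" using amin[of y] y a order_trans by blast
      ultimately show False by simp
    qed
  qed
  thus ?thesis using a by blast
qed

lemma hull_nonneg:
  assumes "c \<in> convex hull (emb ` S)"
  shows "0 \<le> c $ i"
proof -
  have "convex hull (emb ` S) \<subseteq> {x. 0 \<le> x $ i}"
    by (rule hull_minimal) (auto simp: convex_def)
  thus ?thesis using assms by auto
qed

lemma up_in_NP:
  fixes I :: "('n::finite \<Rightarrow> nat) set"
  assumes mi: "monomial_ideal I" and g: "g \<in> I" and v: "\<forall>i. 0 \<le> v $ i"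
  shows "emb g + v \<in> NP I"
proof -
  define M where "M = (\<Sum>i\<in>UNIV. v $ i)"
  have cvx: "convex (NP I)" by (simp add: NP_def)
  have gin: "emb g \<in> NP I" using g by (simp add: NP_def hull_inc)
  show ?thesis
  proof (cases "M = 0")
    case True
    have "v = 0" using True v unfolding M_def
      by (simp add: vec_eq_iff sum_nonneg_eq_0_iff)
    then show ?thesis using gin by simp
  next
    case False
    have Mpos: "M > 0" using False v unfolding M_def by (metis order_le_less sum_nonneg)
    define N where "N = nat \<lceil>M\<rceil>"
    have NM: "real N \<ge> M" unfolding N_def by (rule real_nat_ceiling_ge)
    have Npos: "real N > 0" using NM Mpos by linarith
    define h where "h i = (\<lambda>j. g j + (if j = i then N else 0))" for i
    have hI: "h i \<in> I" for i using mi g unfolding monomial_ideal_def h_def by (auto simp: le_fun_def)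
    have hemb: "emb (h i) = emb g + real N *\<^sub>R axis i 1" for i
      by (simp add: vec_eq_iff h_def axis_def)
    define p1 where "p1 = (\<Sum>i\<in>UNIV. (v $ i / M) *\<^sub>R emb (h i))"
    have p1in: "p1 \<in> NP I"
      unfolding p1_def
    proof (rule convex_sum[OF _ cvx])
      show "(\<Sum>i\<in>UNIV. v $ i / M) = 1" using Mpos unfolding M_def
        by (simp add: sum_divide_distrib[symmetric])
      show "\<And>i. i \<in> UNIV \<Longrightarrow> 0 \<le> v $ i / M" using v Mpos by simp
      show "\<And>i. i \<in> UNIV \<Longrightarrow> emb (h i) \<in> NP I" using hI by (simp add: NP_def hull_inc)
    qed simp
    have p1eq: "p1 = emb g + (real N / M) *\<^sub>R v"
      unfolding p1_def hemb
      using Mpos unfolding M_def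
      by (simp add: vec_eq_iff axis_def algebra_simps sum.distrib sum_divide_distrib[symmetric] sum_distrib_right[symmetric]
          if_distrib cong: if_cong)
    have "(1 - M / real N) *\<^sub>R emb g + (M / real N) *\<^sub>R p1 \<in> NP I"
      by (rule convexD[OF cvx gin p1in]) (use NM Npos Mpos in auto)
    moreover have "(1 - M / real N) *\<^sub>R emb g + (M / real N) *\<^sub>R p1 = emb g + v"
      unfolding p1eq using Mpos Npos by (simp add: algebra_simps)
    ultimately show ?thesis by simp
  qed
qed


lemma shifted_in_rNP:
  fixes I :: "('n::finite \<Rightarrow> nat) set"
  assumes mi: "monomial_ideal I" and c0: "c0 \<in> convex hull (emb ` min_gens I)"
    and v: "\<forall>i. 0 \<le> v $ i" and r: "r > 0"
  shows "r *\<^sub>R c0 + v \<in> (\<lambda>x. r *\<^sub>R x) ` NP I"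
proof -
  define v' where "v' = (1 / r) *\<^sub>R v"
  have v': "\<forall>i. 0 \<le> v' $ i" using v r by (simp add: v'_def)
  have "(\<lambda>x. v' + x) ` emb ` min_gens I \<subseteq> NP I"
  proof
    fix z assume "z \<in> (\<lambda>x. v' + x) ` emb ` min_gens I"
    then obtain g where g: "g \<in> min_gens I" and z: "z = v' + emb g" by auto
    have "g \<in> I" using g by (simp add: min_gens_def)
    from up_in_NP[OF mi this v'] show "z \<in> NP I" by (simp add: z add.commute)
  qed
  hence "convex hull ((\<lambda>x. v' + x) ` emb ` min_gens I) \<subseteq> NP I"
    by (intro hull_minimal) (auto simp: NP_def)
  hence "v' + c0 \<in> NP I" using c0 by (auto simp: convex_hull_translation)
  moreover have "r *\<^sub>R c0 + v = r *\<^sub>R (v' + c0)" using r by (simp add: v'_def algebra_simps)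
  ultimately show ?thesis by blast
qed

lemma NP_below:
  fixes I :: "('n::finite \<Rightarrow> nat) set"
  assumes y: "y \<in> NP I"
  shows "\<exists>c0 \<in> convex hull (emb ` min_gens I). \<forall>i. c0 $ i \<le> y $ i"
proof -
  define H where "H = convex hull (emb ` min_gens I)"
  define D where "D = {y. \<exists>c0\<in>H. \<forall>i. c0 $ i \<le> y $ i}"
  have "emb ` I \<subseteq> D"
  proof
    fix z assume "z \<in> emb ` I"
    then obtain b where b: "b \<in> I" "z = emb b" by auto
    obtain a where a: "a \<in> min_gens I" "a \<le> b" using exists_min_below[OF b(1)] by blast
    have "emb a \<in> H" using a(1) by (simp add: H_def hull_inc)
    moreover have "\<forall>i. emb a $ i \<le> z $ i" using a(2) b(2) by (simp add: le_fun_def)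
    ultimately show "z \<in> D" unfolding D_def by blast
  qed
  moreover have "convex D"
  proof (rule convexI)
    fix x z :: "real^'n" and u v :: real
    assume x: "x \<in> D" and z: "z \<in> D" and "0 \<le> u" "0 \<le> v" "u + v = 1"
    hence uv: "0 \<le> u \<and> 0 \<le> v \<and> u + v = 1" by simp
    obtain c1 where c1: "c1 \<in> H" "\<forall>i. c1 $ i \<le> x $ i" using x by (auto simp: D_def)
    obtain c2 where c2: "c2 \<in> H" "\<forall>i. c2 $ i \<le> z $ i" using z by (auto simp: D_def)
    have "u *\<^sub>R c1 + v *\<^sub>R c2 \<in> H"
      using convexD[of H c1 c2 u v] c1 c2 uv by (simp add: H_def)
    moreover have "\<forall>i. (u *\<^sub>R c1 + v *\<^sub>R c2) $ i \<le> (u *\<^sub>R x + v *\<^sub>R z) $ i"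
      using c1(2) c2(2) uv by (simp add: add_mono mult_left_mono)
    ultimately show "u *\<^sub>R x + v *\<^sub>R z \<in> D" unfolding D_def by blast
  qed
  ultimately have "NP I \<subseteq> D" unfolding NP_def by (rule hull_minimal)
  thus ?thesis using y by (auto simp: D_def H_def)
qed

lemma segment_tight:
  fixes c z A :: "real^'n::finite"
  assumes K: "convex K" and c: "c \<in> K" and z: "z \<in> K" and cA: "\<forall>i. c $ i \<le> A $ i"
  shows "\<exists>c'\<in>K. (\<forall>i. c' $ i \<le> A $ i) \<and> (c' = z \<or> (\<exists>i. c' $ i = A $ i))"
proof (cases "\<forall>i. z $ i \<le> A $ i")
  case True then show ?thesis using z by blast
next
  case False
  define J where "J = {i. A $ i < z $ i}"
  define t where "t i = (A $ i - c $ i) / (z $ i - c $ i)" for i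
  define t0 where "t0 = Min (t ` J)"
  have Jne: "J \<noteq> {}" using False by (auto simp: J_def not_le)
  have fin: "finite (t ` J)" by simp
  have "t0 \<in> t ` J" unfolding t0_def using Jne fin by (intro Min_in) auto
  then obtain i0 where i0: "i0 \<in> J" "t0 = t i0" by auto
  have tle: "t0 \<le> t i" if "i \<in> J" for i unfolding t0_def using that fin by simp
  have den: "z $ i - c $ i > 0" if "i \<in> J" for i using that cA[rule_format, of i] by (simp add: J_def)
  have t0ge: "t0 \<ge> 0" using i0 den[OF i0(1)] cA by (simp add: t_def)
  have t0le: "t0 \<le> 1" using i0 den[OF i0(1)] by (simp add: t_def J_def)
  define c' where "c' = (1 - t0) *\<^sub>R c + t0 *\<^sub>R z"
  have c'K: "c' \<in> K" unfolding c'_def by (rule convexD[OF K c z]) (use t0ge t0le in auto)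
  have c'i: "c' $ i = c $ i + t0 * (z $ i - c $ i)" for i by (simp add: c'_def algebra_simps)
  have le: "c' $ i \<le> A $ i" for i
  proof (cases "i \<in> J")
    case True
    have "t0 * (z $ i - c $ i) \<le> t i * (z $ i - c $ i)"
      using tle[OF True] den[OF True] by (simp add: mult_right_mono)
    also have "\<dots> = A $ i - c $ i" using den[OF True] by (simp add: t_def)
    finally show ?thesis by (simp add: c'i)
  next
    case False
    hence "z $ i \<le> A $ i" by (simp add: J_def)
    hence "(1 - t0) * c $ i + t0 * z $ i \<le> (1 - t0) * A $ i + t0 * A $ i"
      using cA t0ge t0le by (intro add_mono mult_left_mono) auto
    thus ?thesis by (simp add: c'_def algebra_simps)
  qed
  have "c' $ i0 = A $ i0" using den[OF i0(1)] by (simp add: c'i i0(2) t_def)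
  thus ?thesis using c'K le by blast
qed

lemma in_scaled_simplex:
  fixes w :: "real^'n::finite"
  assumes s: "s \<ge> 0" and w: "\<forall>i. 0 \<le> w $ i" and ws: "(\<Sum>i\<in>UNIV. w $ i) \<le> s"
  shows "w \<in> (\<lambda>v. s *\<^sub>R v) ` unit_simplex"
proof (cases "s = 0")
  case True
  have "(\<Sum>i\<in>UNIV. w $ i) = 0" using ws w True by (simp add: sum_nonneg order_antisym)
  hence "w = 0" using w by (simp add: vec_eq_iff sum_nonneg_eq_0_iff)
  moreover have "(0::real^'n) \<in> unit_simplex" by (simp add: unit_simplex_def)
  ultimately show ?thesis using True by (auto intro!: image_eqI[of _ _ 0])
next
  case False
  hence sp: "s > 0" using s by simp
  have "(1 / s) *\<^sub>R w \<in> unit_simplex"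
    using w ws sp by (simp add: unit_simplex_def sum_divide_distrib[symmetric])
  moreover have "w = s *\<^sub>R ((1 / s) *\<^sub>R w)" using sp by simp
  ultimately show ?thesis by blast
qed


theorem theorem3p5:
  fixes I :: "('n::finite \<Rightarrow> nat) set" and p q :: nat
  assumes "monomial_ideal I" and "0 < p" and "0 < q"
  shows "(\<forall>a \<in> min_gens (real_power I (real p / real q)). emb a \<in> C_set I p q)
       \<and> (\<forall>a. emb a \<in> C_set I p q \<longrightarrow> a \<in> real_power I (real p / real q))
       \<and> real_power I (real p / real q) = gen_ideal {a. emb a \<in> C_set I p q}"
proof -
  note mi = assms(1)
  define r where "r = real p / real q"
  define G where "G = min_gens I"
  define H where "H = convex hull (emb ` G)"
  define s where "s = real CARD('n) - 1 / real q"
  define S where "S = {a. emb a \<in> (\<lambda>v. r *\<^sub>R v) ` NP I}"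
  have rpos: "r > 0" using assms by (simp add: r_def)
  have q1: "real q \<ge> 1" using assms by simp
  have d1: "real CARD('n) \<ge> 1" by simp
  have "1 / real q \<le> 1" using q1 by simp
  hence s0: "s \<ge> 0" using d1 unfolding s_def by linarith
  have RP: "real_power I r = gen_ideal S" by (simp add: real_power_def S_def)
  have Cset: "C_set I p q = minkowski_sum ((\<lambda>v. r *\<^sub>R v) ` H) ((\<lambda>v. s *\<^sub>R v) ` unit_simplex)"
    by (simp add: C_set_def r_def s_def H_def G_def newton_polytope_def)
  have part2: "\<forall>a. emb a \<in> C_set I p q \<longrightarrow> a \<in> real_power I r"
  proof (intro allI impI)
    fix a assume "emb a \<in> C_set I p q"
    then obtain x u where x: "x \<in> H" and u: "u \<in> unit_simplex" and ea: "emb a = r *\<^sub>R x + s *\<^sub>R u"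
      unfolding Cset minkowski_sum_def by auto
    have "\<forall>i. 0 \<le> (s *\<^sub>R u) $ i" using s0 u by (simp add: unit_simplex_def)
    from shifted_in_rNP[OF mi _ this rpos, of x] x have "emb a \<in> (\<lambda>v. r *\<^sub>R v) ` NP I"
      by (simp add: ea H_def G_def)
    hence "a \<in> S" by (simp add: S_def)
    thus "a \<in> real_power I r" unfolding RP gen_ideal_def by blast
  qed
  have part1: "\<forall>a \<in> min_gens (real_power I r). emb a \<in> C_set I p q"
  proof
    fix a assume amin: "a \<in> min_gens (real_power I r)"
    hence amin': "a \<in> gen_ideal S" "\<And>b. b \<in> gen_ideal S \<Longrightarrow> b \<le> a \<Longrightarrow> b = a"
      by (auto simp: RP min_gens_def)
    have SG: "b \<in> S \<Longrightarrow> b \<in> gen_ideal S" for b by (auto simp: gen_ideal_def)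
    have aS: "a \<in> S"
    proof -
      obtain b where "b \<in> S" "b \<le> a" using amin'(1) by (auto simp: gen_ideal_def)
      with amin'(2)[OF SG] show ?thesis by metis
    qed
    have notS: "a (i := a i - 1) \<notin> S" if "a i \<ge> 1" for i
    proof
      assume "a (i := a i - 1) \<in> S"
      hence "a (i := a i - 1) = a" using amin'(2)[OF SG] by (auto simp: le_fun_def)
      hence "a i - 1 = a i" by (metis fun_upd_same)
      thus False using that by simp
    qed
    from aS obtain y where y: "y \<in> NP I" and ey: "emb a = r *\<^sub>R y" by (auto simp: S_def)
    obtain c0 where c0: "c0 \<in> H" "\<forall>i. c0 $ i \<le> y $ i"
      using NP_below[OF y] by (auto simp: H_def G_def)
    have "G \<noteq> {}" using c0(1) by (auto simp: H_def)
    then obtain g where g: "g \<in> G" by auto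
    define K where "K = (\<lambda>v. r *\<^sub>R v) ` H"
    have K: "convex K" unfolding K_def H_def by (intro convex_scaling convex_convex_hull)
    have c0K: "r *\<^sub>R c0 \<in> K" using c0(1) unfolding K_def by (rule imageI)
    have gK: "r *\<^sub>R emb g \<in> K" unfolding K_def H_def using g by (intro imageI hull_inc) simp
    have c0a: "\<forall>i. (r *\<^sub>R c0) $ i \<le> emb a $ i" using c0(2) rpos by (simp add: ey)
    obtain c' where c'K: "c' \<in> K" and c'le: "\<forall>i. c' $ i \<le> emb a $ i"
      and c'cases: "c' = r *\<^sub>R emb g \<or> (\<exists>i. c' $ i = emb a $ i)"
      using segment_tight[OF K c0K gK c0a] by blast
    obtain x where x: "x \<in> H" and c'x: "c' = r *\<^sub>R x" using c'K by (auto simp: K_def)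
    define w where "w = emb a - c'"
    have w0: "\<forall>i. 0 \<le> w $ i" using c'le by (simp add: w_def)
    have c'0: "0 \<le> c' $ i" for i
      using hull_nonneg[of x G i] x rpos by (simp add: c'x H_def)
    have wlt: "w $ i < 1" for i
    proof (rule ccontr)
      assume "\<not> w $ i < 1"
      hence w1: "w $ i \<ge> 1" by simp
      have "real (a i) \<ge> 1" using w1 c'0[of i] by (simp add: w_def)
      hence ai: "a i \<ge> 1" by simp
      define v where "v = w - axis i 1"
      have v0: "\<forall>j. 0 \<le> v $ j" using w0 w1 by (simp add: v_def axis_def)
      have "emb (a (i := a i - 1)) = r *\<^sub>R x + v"
        using ai by (simp add: vec_eq_iff v_def w_def c'x axis_def of_nat_diff)
      hence "emb (a (i := a i - 1)) \<in> (\<lambda>v. r *\<^sub>R v) ` NP I"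
        using shifted_in_rNP[OF mi _ v0 rpos, of x] x by (simp add: H_def G_def)
      hence "a (i := a i - 1) \<in> S" by (simp add: S_def)
      with notS[OF ai] show False by simp
    qed
    have wsum: "(\<Sum>i\<in>UNIV. w $ i) \<le> s"
      using c'cases
    proof
      assume cg: "c' = r *\<^sub>R emb g"
      have wi: "w $ i \<le> 1 - 1 / real q" for i
      proof -
        define k :: int where "k = int (q * a i) - int (p * g i)"
        have "real q * w $ i = of_int k"
          using assms by (simp add: k_def w_def cg r_def field_simps)
        moreover have "real q * w $ i < real q" using wlt[of i] assms by simp
        ultimately have "k < int q" by linarith
        hence "k \<le> int q - 1" by simp
        hence "real q * w $ i \<le> real q - 1" using \<open>real q * w $ i = of_int k\<close> by linarith
        thus ?thesis using assms by (simp add: field_simps)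
      qed
      have "(\<Sum>i\<in>UNIV. w $ i) \<le> (\<Sum>i\<in>(UNIV::'n set). 1 - 1 / real q)"
        by (rule sum_mono) (simp add: wi)
      also have "\<dots> = real CARD('n) * (1 - 1 / real q)" by simp
      also have "\<dots> \<le> s" using d1 q1 by (simp add: s_def algebra_simps divide_right_mono)
      finally show ?thesis .
    next
      assume "\<exists>j. c' $ j = emb a $ j"
      then obtain j where "c' $ j = emb a $ j" by blast
      hence wj: "w $ j = 0" by (simp add: w_def)
      have "(\<Sum>i\<in>UNIV. w $ i) = w $ j + (\<Sum>i\<in>UNIV - {j}. w $ i)"
        by (simp add: sum.remove)
      also have "\<dots> = (\<Sum>i\<in>UNIV - {j}. w $ i)" using wj by simp
      also have "\<dots> \<le> of_nat (card (UNIV - {j} :: 'n set)) * 1"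
        by (rule sum_bounded_above) (use wlt in \<open>simp add: less_imp_le\<close>)
      also have "\<dots> = real CARD('n) - 1"
        by (simp add: card_Diff_singleton of_nat_diff)
      also have "\<dots> \<le> s" using q1 by (simp add: s_def)
      finally show ?thesis .
    qed
    have "w \<in> (\<lambda>v. s *\<^sub>R v) ` unit_simplex" by (rule in_scaled_simplex[OF s0 w0 wsum])
    moreover have "emb a = c' + w" by (simp add: w_def)
    ultimately show "emb a \<in> C_set I p q"
      unfolding Cset minkowski_sum_def using c'K K_def by blast
  qed
  have part3: "real_power I r = gen_ideal {a. emb a \<in> C_set I p q}"
  proof
    show "real_power I r \<subseteq> gen_ideal {a. emb a \<in> C_set I p q}"
    proof
      fix b assume "b \<in> real_power I r"
      then obtain a where "a \<in> min_gens (real_power I r)" "a \<le> b" using exists_min_below by blast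
      with part1 show "b \<in> gen_ideal {a. emb a \<in> C_set I p q}" by (auto simp: gen_ideal_def)
    qed
  next
    show "gen_ideal {a. emb a \<in> C_set I p q} \<subseteq> real_power I r"
    proof
      fix b assume "b \<in> gen_ideal {a. emb a \<in> C_set I p q}"
      then obtain a where a: "emb a \<in> C_set I p q" "a \<le> b" by (auto simp: gen_ideal_def)
      from part2 a(1) have "a \<in> gen_ideal S" by (simp add: RP)
      then obtain a0 where "a0 \<in> S" "a0 \<le> a" by (auto simp: gen_ideal_def)
      with a(2) have "a0 \<in> S" "a0 \<le> b" using order_trans by blast+
      thus "b \<in> real_power I r" by (auto simp: RP gen_ideal_def)
    qed
  qed
  show ?thesis using part1 part2 part3 by (simp add: r_def)
qed

end
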